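(* If $n\ge 3t+1$, then in every execution of COOL all honest processors output the same message (consistency).
   Context: Setting. $n$ processors indexed by $[1:n]$, pairwise joined by reliable private synchronous channels; recipients know senders. At most $t$ processors are dishonest, controlled by a Byzantine adversary of unbounded computational power knowing all inputs, who may make them deviate arbitrarily (missing values are replaced by a fixed default); the others are honest. Processor $i$ holds an $\ell$-bit initial message $\boldsymbol w_i$. $\phi$ is a default value different from every $\ell$-bit message. Logarithms are base 2. Code. $k=\lfloor t/5\rfloor+1$, $c=\lceil \max\{\ell,(t/5+1)\log(n+1)\}/k\rceil$. Messages are zero-padded to $kc$ bits and viewed in $GF(2^c)^k$. Integers in $[1:n]$ are identified with distinct nonzero elements of $GF(2^c)$; $\boldsymbol h_i\in GF(2^c)^k$ has entries $h_{i,j}=\prod_{p\in[1:k],\,p\ne j}\frac{i-p}{j-p}$ (field arithmetic). COOL (honest processor $i$). Initialization: updated message $\boldsymbol w^{(i)}:=\boldsymbol w_i$, $y^{(i)}_j:=\boldsymbol h_j^{\mathsf T}\boldsymbol w_i$ for $j\in[1:n]$, $u_i(i):=1$. Phase 1. (a) Send $(y^{(i)}_j,y^{(i)}_i)$ to each $j\ne i$. (b) For $j\ne i$, link indicator $u_i(j):=1$ if the pair received from $j$ equals $(y^{(i)}_i,y^{(i)}_j)$, else $0$. Success indicator $s_i:=1$ if $\sum_{j=1}^n u_i(j)\ge n-t$; otherwise $s_i:=0$ and $\boldsymbol w^{(i)}:=\phi$. (c) Send $s_i$ to all; each processor records the indicator received from each $j$ (own for itself) and forms $\mathcal S_1=\{j:s_j=1\}$,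 $\mathcal S_0=\{j:s_j=0\}$ (views may differ). Phase 2. If $s_i=1$: set $u_i(j):=0$ for all $j\in\mathcal S_0$; if now $\sum_j u_i(j)<n-t$, set $s_i:=0$, $\boldsymbol w^{(i)}:=\phi$, and send $s_i=0$ to all. Everyone overwrites recorded indicators with newly received ones and recomputes $\mathcal S_0,\mathcal S_1$. Phase 3. Repeat Phase 2 once more. Vote $v_i:=1$ if the recorded indicators satisfy $\sum_j s_j\ge 2t+1$, else $0$. Run on the votes a deterministic error-free binary Byzantine agreement protocol for $t<n/3$ (e.g. Berman–Garay–Perry or Coan–Welch), which guarantees all honest processors decide, decide equally, and decide the common honest vote when all honest votes agree. If the decision is $0$: set $\boldsymbol w^{(i)}:=\phi$, output $\phi$, stop. Phase 4 (decision 1). If $s_i=0$: replace $y^{(i)}_i$ by the most frequent value (fixed tie-breaking) among the first components of the Phase-1 pairs received from $j\in\mathcal S_1$; send it to each $j\in\mathcal S_0\setminus\{i\}$; with $z_i=y^{(i)}_i$, $z_j$ = value received from $j$ in Phase 4 for $j\in\mathcal S_0\setminus\{i\}$, $z_j$ = second component of the Phase-1 pair from $j$ for $j\in\mathcal S_1$, set $\boldsymbol w^{(i)}$ to a message $\boldsymbol x$ with $\boldsymbol h_j^{\mathsf T}\boldsymbol x=z_j$ for at least $n-t$ indices $j$ ($\phi$ if none). If $s_i=1$ keep $\boldsymbol w^{(i)}$. Output $\boldsymbol w^{(i)}$ and stop. *)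

theory Defs
  imports Complex_Main
begin

definition kpar :: "nat \<Rightarrow> nat" where
  "kpar t = t div 5 + 1"

definition cpar :: "nat \<Rightarrow> nat \<Rightarrow> nat \<Rightarrow> nat" where
  "cpar n t l = nat \<lceil> max (real l) ((real t / 5 + 1) * log 2 (real n + 1)) / real (kpar t) \<rceil>"

text \<open>Lagrange coefficients h_{i,j}; emb identifies integers with field elements.\<close>
definition hcoef :: "(nat \<Rightarrow> 'f::field) \<Rightarrow> nat \<Rightarrow> nat \<Rightarrow> nat \<Rightarrow> 'f" where
  "hcoef emb k i j = (\<Prod>p\<in>{1..k} - {j}. (emb i - emb p) / (emb j - emb p))"

text \<open>Coded symbol h_i^T x, vectors of GF(2^c)^k are lists of length k (entry j is x!(j-1)).\<close>
definition cw :: "(nat \<Rightarrow> 'f::field) \<Rightarrow> nat \<Rightarrow> 'f list \<Rightarrow> nat \<Rightarrow> 'f" where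
  "cw emb k x i = (\<Sum>j\<in>{1..k}. hcoef emb k i j * x ! (j - 1))"

definition encode_msg :: "(bool list \<Rightarrow> 'f) \<Rightarrow> nat \<Rightarrow> nat \<Rightarrow> bool list \<Rightarrow> 'f list" where
  "encode_msg b2f k c w =
     map (\<lambda>p. b2f (take c (drop (p * c) (w @ replicate (k * c - length w) False)))) [0..<k]"

section \<open>Adversary: values sent by dishonest processors (sender, recipient)\<close>

record 'f adversary =
  ph1  :: "nat \<Rightarrow> nat \<Rightarrow> 'f \<times> 'f"
  ph1s :: "nat \<Rightarrow> nat \<Rightarrow> bool"
  ph2  :: "nat \<Rightarrow> nat \<Rightarrow> bool option"   \<comment> \<open>Phase 2 indicator (None = nothing sent)\<close>
  ph3  :: "nat \<Rightarrow> nat \<Rightarrow> bool option"   \<comment> \<open>Phase 3 indicator (None = nothing sent)\<close>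
  ph4  :: "nat \<Rightarrow> nat \<Rightarrow> 'f"

definition valid_tb :: "('f set \<Rightarrow> 'f) \<Rightarrow> bool" where
  "valid_tb tb \<longleftrightarrow> (\<forall>A. A \<noteq> {} \<longrightarrow> tb A \<in> A)"

definition valid_decoder ::
  "(nat \<Rightarrow> 'f::field) \<Rightarrow> nat \<Rightarrow> nat \<Rightarrow> (nat \<Rightarrow> (nat \<Rightarrow> 'f) \<Rightarrow> 'f list option) \<Rightarrow> bool" where
  "valid_decoder emb n t dec \<longleftrightarrow>
     (\<forall>i z. (if \<exists>x. length x = kpar t \<and> card {j\<in>{1..n}. cw emb (kpar t) x j = z j} \<ge> n - t
             then (\<exists>x. dec i z = Some x \<and> length x = kpar t \<and>
                        card {j\<in>{1..n}. cw emb (kpar t) x j = z j} \<ge> n - t)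
             else dec i z = None))"

text \<open>W i: updated message initialisation (encoded input of processor i); B: dishonest set;
  dflt: default value for missing values; tb: tie-breaking; d: BA decision; dec: decoder.
  phi is represented by None.\<close>

locale cool_exec =
  fixes n t :: nat and emb :: "nat \<Rightarrow> 'f::field" and B :: "nat set"
    and W :: "nat \<Rightarrow> 'f list" and adv :: "'f adversary" and dflt :: 'f
    and tb :: "'f set \<Rightarrow> 'f"
begin

definition k :: nat where "k = kpar t"

definition recv1 :: "nat \<Rightarrow> nat \<Rightarrow> 'f \<times> 'f" where
  "recv1 i j = (if j \<in> B then ph1 adv j i else (cw emb k (W j) i, cw emb k (W j) j))"

definition link1 :: "nat \<Rightarrow> nat \<Rightarrow> bool" where
  "link1 i j \<longleftrightarrow> j = i \<or> recv1 i j = (cw emb k (W i) i, cw emb k (W i) j)"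

definition s1 :: "nat \<Rightarrow> bool" where
  "s1 i \<longleftrightarrow> card {j\<in>{1..n}. link1 i j} \<ge> n - t"

definition rec1 :: "nat \<Rightarrow> nat \<Rightarrow> bool" where
  "rec1 i j = (if j = i then s1 i else if j \<in> B then ph1s adv j i else s1 j)"

definition link2 :: "nat \<Rightarrow> nat \<Rightarrow> bool" where
  "link2 i j \<longleftrightarrow> link1 i j \<and> rec1 i j"

definition s2 :: "nat \<Rightarrow> bool" where
  "s2 i \<longleftrightarrow> s1 i \<and> card {j\<in>{1..n}. link2 i j} \<ge> n - t"

definition msg2 :: "nat \<Rightarrow> nat \<Rightarrow> bool option" where
  "msg2 j i = (if j \<in> B then ph2 adv j i else if s1 j \<and> \<not> s2 j then Some False else None)"

definition rec2 :: "nat \<Rightarrow> nat \<Rightarrow> bool" where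
  "rec2 i j = (if j = i then s2 i else (case msg2 j i of None \<Rightarrow> rec1 i j | Some b \<Rightarrow> b))"

definition link3 :: "nat \<Rightarrow> nat \<Rightarrow> bool" where
  "link3 i j \<longleftrightarrow> link2 i j \<and> rec2 i j"

definition s3 :: "nat \<Rightarrow> bool" where
  "s3 i \<longleftrightarrow> s2 i \<and> card {j\<in>{1..n}. link3 i j} \<ge> n - t"

definition msg3 :: "nat \<Rightarrow> nat \<Rightarrow> bool option" where
  "msg3 j i = (if j \<in> B then ph3 adv j i else if s2 j \<and> \<not> s3 j then Some False else None)"

definition rec3 :: "nat \<Rightarrow> nat \<Rightarrow> bool" where
  "rec3 i j = (if j = i then s3 i else (case msg3 j i of None \<Rightarrow> rec2 i j | Some b \<Rightarrow> b))"

definition vote :: "nat \<Rightarrow> bool" where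
  "vote i \<longleftrightarrow> card {j\<in>{1..n}. rec3 i j} \<ge> 2 * t + 1"

definition S1view :: "nat \<Rightarrow> nat set" where
  "S1view i = {j\<in>{1..n}. rec3 i j}"

definition freq :: "nat \<Rightarrow> 'f \<Rightarrow> nat" where
  "freq i v = card {j\<in>S1view i. fst (recv1 i j) = v}"

definition modes :: "nat \<Rightarrow> 'f set" where
  "modes i = {v. (\<exists>j\<in>S1view i. fst (recv1 i j) = v) \<and> (\<forall>v'. freq i v' \<le> freq i v)}"

definition ynew :: "nat \<Rightarrow> 'f" where
  "ynew i = tb (modes i)"

text \<open>Value received by i from j in Phase 4 (dflt if nothing is sent).\<close>
definition recv4 :: "nat \<Rightarrow> nat \<Rightarrow> 'f" where
  "recv4 i j = (if j \<in> B then ph4 adv j i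
               else if \<not> s3 j \<and> \<not> rec3 j i then ynew j else dflt)"

definition zvec :: "nat \<Rightarrow> nat \<Rightarrow> 'f" where
  "zvec i j = (if j = i then ynew i else if \<not> rec3 i j then recv4 i j else snd (recv1 i j))"

definition cool_output :: "bool \<Rightarrow> (nat \<Rightarrow> (nat \<Rightarrow> 'f) \<Rightarrow> 'f list option) \<Rightarrow> nat \<Rightarrow> 'f list option" where
  "cool_output d dec i = (if \<not> d then None else if s3 i then Some (W i) else dec i (zvec i))"

end

end

theory Submission
  imports Defs "HOL-Computational_Algebra.Polynomial"
begin


definition lpoly :: "(nat \<Rightarrow> 'f::field) \<Rightarrow> nat \<Rightarrow> nat \<Rightarrow> 'f poly" where
  "lpoly emb k j = (\<Prod>p\<in>{1..k} - {j}. smult (1 / (emb j - emb p)) [:- emb p, 1:])"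

lemma poly_lpoly: "poly (lpoly emb k j) (emb i) = hcoef emb k i j"
  unfolding lpoly_def hcoef_def poly_prod by (simp add: diff_divide_distrib)

lemma degree_lpoly: "degree (lpoly emb k j) \<le> k - 1" if "j \<in> {1..k}"
proof -
  have "degree (lpoly emb k j) \<le> sum (degree \<circ> (\<lambda>p. smult (1 / (emb j - emb p)) [:- emb p, 1:])) ({1..k} - {j})"
    unfolding lpoly_def by (rule degree_prod_sum_le) simp
  also have "\<dots> \<le> sum (\<lambda>_. 1) ({1..k} - {j})"
    by (intro sum_mono) (simp add: degree_smult_le)
  also have "\<dots> \<le> k - 1"
    using that by (simp add: card_Diff_singleton)
  finally show ?thesis .
qed

lemma hcoef_kron:
  assumes inj: "inj_on emb {1..k}" and i: "i \<in> {1..k}" and j: "j \<in> {1..k}"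
  shows "hcoef emb k i j = (if i = j then 1 else 0)"
proof (cases "i = j")
  case True
  have "\<And>p. p \<in> {1..k} - {j} \<Longrightarrow> (emb i - emb p) / (emb j - emb p) = 1"
  proof -
    fix p assume "p \<in> {1..k} - {j}"
    then have "emb j \<noteq> emb p" using inj j by (auto dest: inj_onD)
    then show "(emb i - emb p) / (emb j - emb p) = 1" using True by simp
  qed
  then show ?thesis unfolding hcoef_def using True by simp
next
  case False
  have "i \<in> {1..k} - {j}" using i False by simp
  then show ?thesis unfolding hcoef_def using False
    by (intro trans[OF prod_zero]) auto
qed

lemma cw_agree:
  fixes emb :: "nat \<Rightarrow> 'f::field"
  assumes inj: "inj_on emb {1..n}" and kn: "k \<le> n"
    and lx: "length x = k" and ly: "length y = k" and ne: "x \<noteq> y"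
  shows "card {r\<in>{1..n}. cw emb k x r = cw emb k y r} \<le> k - 1"
proof -
  define P where "P = (\<Sum>j\<in>{1..k}. smult (x ! (j - 1) - y ! (j - 1)) (lpoly emb k j))"
  have polyP: "poly P (emb r) = cw emb k x r - cw emb k y r" for r
    unfolding P_def cw_def poly_sum by (simp add: poly_lpoly algebra_simps sum_subtractf)
  have degP: "degree P \<le> k - 1"
    unfolding P_def by (intro degree_sum_le) (use degree_lpoly in \<open>auto intro!: order.trans[OF degree_smult_le]\<close>)
  obtain j0 where j0: "j0 < k" "x ! j0 \<noteq> y ! j0"
    using ne lx ly nth_equalityI by metis
  have inj': "inj_on emb {1..k}" using inj kn by (auto intro: inj_on_subset)
  have "poly P (emb (Suc j0)) = x ! j0 - y ! j0"
  proof -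
    have "poly P (emb (Suc j0)) = (\<Sum>j\<in>{1..k}. hcoef emb k (Suc j0) j * (x ! (j - 1) - y ! (j - 1)))"
      unfolding polyP cw_def by (simp add: algebra_simps sum_subtractf)
    also have "\<dots> = (\<Sum>j\<in>{1..k}. if j = Suc j0 then x ! (j - 1) - y ! (j - 1) else 0)"
      using j0 by (intro sum.cong refl) (simp add: hcoef_kron[OF inj'])
    also have "\<dots> = x ! j0 - y ! j0" using j0 by simp
    finally show ?thesis .
  qed
  then have P0: "P \<noteq> 0" using j0 by auto
  have "card {r\<in>{1..n}. cw emb k x r = cw emb k y r} = card (emb ` {r\<in>{1..n}. cw emb k x r = cw emb k y r})"
    by (rule card_image[symmetric]) (auto intro: inj_on_subset[OF inj])
  also have "\<dots> \<le> card {a. poly P a = 0}"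
    by (intro card_mono poly_roots_finite P0) (auto simp: polyP)
  also have "\<dots> \<le> degree P" by (rule card_poly_roots_bound[OF P0])
  finally show ?thesis using degP by simp
qed



locale cool_ok = cool_exec +
  assumes n_ge: "n \<ge> 3 * t + 1" and B_sub: "B \<subseteq> {1..n}" and B_card: "card B \<le> t"
    and emb_inj: "inj_on emb {1..n}" and lenW: "\<And>i. length (W i) = k"
    and tb_ok: "valid_tb tb"
begin

definition H where "H = {1..n} - B"

lemma k_eq: "k = t div 5 + 1" unfolding k_def kpar_def by simp

lemma finH: "finite H" unfolding H_def by simp

lemma cardH: "card H = n - card B"
  unfolding H_def using B_sub by (simp add: card_Diff_subset finite_subset)

lemma cardH_ge: "card H \<ge> 2 * t + 1" using cardH n_ge B_card by linarith

lemma count_H: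
  assumes "card {j\<in>{1..n}. P j} \<ge> n - t"
  shows "card {j\<in>H. P j} \<ge> card H - t"
proof -
  have "{j\<in>{1..n}. P j} \<subseteq> {j\<in>H. P j} \<union> B" unfolding H_def by auto
  then have "card {j\<in>{1..n}. P j} \<le> card ({j\<in>H. P j} \<union> B)"
    by (intro card_mono) (use B_sub finite_subset in \<open>auto simp: H_def\<close>)
  also have "\<dots> \<le> card {j\<in>H. P j} + card B" by (rule card_Un_le)
  finally show ?thesis using assms cardH n_ge B_card by linarith
qed

lemma rec1_h: "i \<in> H \<Longrightarrow> j \<in> H \<Longrightarrow> rec1 i j = s1 j"
  unfolding rec1_def H_def by auto

lemma s2_s1: "s2 i \<Longrightarrow> s1 i" unfolding s2_def by simp
lemma s3_s2: "s3 i \<Longrightarrow> s2 i" unfolding s3_def by simp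

lemma rec2_h: "i \<in> H \<Longrightarrow> j \<in> H \<Longrightarrow> rec2 i j = s2 j"
  unfolding rec2_def msg2_def using rec1_h[of i j] s2_s1[of j] by (auto simp: H_def)

lemma rec3_h: "i \<in> H \<Longrightarrow> j \<in> H \<Longrightarrow> rec3 i j = s3 j"
  unfolding rec3_def msg3_def using rec2_h[of i j] s3_s2[of j] by (auto simp: H_def)

lemma link1_h: "i \<in> H \<Longrightarrow> j \<in> H \<Longrightarrow> link1 i j \<longleftrightarrow>
   j = i \<or> (cw emb k (W j) i = cw emb k (W i) i \<and> cw emb k (W j) j = cw emb k (W i) j)"
  unfolding link1_def recv1_def H_def by auto

lemma F1: "i \<in> H \<Longrightarrow> s1 i \<Longrightarrow> card {j\<in>H. link1 i j} \<ge> card H - t"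
  unfolding s1_def by (rule count_H)

lemma F2: "i \<in> H \<Longrightarrow> s2 i \<Longrightarrow> card {j\<in>H. link1 i j \<and> s1 j} \<ge> card H - t"
proof -
  assume i: "i \<in> H" and "s2 i"
  then have "card {j\<in>H. link2 i j} \<ge> card H - t" unfolding s2_def by (intro count_H) simp
  moreover have "{j\<in>H. link2 i j} = {j\<in>H. link1 i j \<and> s1 j}"
    using rec1_h[OF i] unfolding link2_def by auto
  ultimately show ?thesis by simp
qed

lemma F3: "i \<in> H \<Longrightarrow> s3 i \<Longrightarrow> card {j\<in>H. link1 i j \<and> s2 j} \<ge> card H - t"
proof -
  assume i: "i \<in> H" and "s3 i"
  then have "card {j\<in>H. link3 i j} \<ge> card H - t" unfolding s3_def by (intro count_H) simp
  moreover have "{j\<in>H. link3 i j} = {j\<in>H. link1 i j \<and> s2 j}"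
    using rec1_h[OF i] rec2_h[OF i] s2_s1 unfolding link3_def link2_def by auto
  ultimately show ?thesis by simp
qed

definition Ag where "Ag u u' = {r\<in>{1..n}. cw emb k u r = cw emb k u' r}"

lemma Ag_sym: "Ag u u' = Ag u' u" unfolding Ag_def by auto

lemma k_le_n: "k \<le> n" using k_eq n_ge by linarith

lemma card_Ag: "length u = k \<Longrightarrow> length u' = k \<Longrightarrow> u \<noteq> u' \<Longrightarrow> card (Ag u u') \<le> t div 5"
  unfolding Ag_def using cw_agree[OF emb_inj k_le_n, of u u'] k_eq by simp

definition Q where "Q u = {q\<in>H. cw emb k (W q) q = cw emb k u q}"

lemma Q_big: assumes i: "i \<in> H" "s1 i" shows "card (Q (W i)) \<ge> card H - t"
proof -
  have "{j\<in>H. link1 i j} \<subseteq> Q (W i)" using link1_h[OF i(1)] unfolding Q_def by auto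
  then have "card {j\<in>H. link1 i j} \<le> card (Q (W i))"
    by (intro card_mono) (auto simp: Q_def finH)
  then show ?thesis using F1[OF i] by linarith
qed

lemma Q_int: "length u = k \<Longrightarrow> length u' = k \<Longrightarrow> u \<noteq> u' \<Longrightarrow> card (Q u \<inter> Q u') \<le> t div 5"
proof -
  assume a: "length u = k" "length u' = k" "u \<noteq> u'"
  have "Q u \<inter> Q u' \<subseteq> Ag u u'" unfolding Q_def Ag_def H_def by auto
  then have "card (Q u \<inter> Q u') \<le> card (Ag u u')" by (intro card_mono) (auto simp: Ag_def)
  then show ?thesis using card_Ag[OF a] by linarith
qed

lemma three_msgs:
  assumes p: "p1 \<in> H" "s1 p1" "p2 \<in> H" "s1 p2" "p3 \<in> H" "s1 p3"
    and d: "W p1 \<noteq> W p2" "W p1 \<noteq> W p3" "W p2 \<noteq> W p3"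
  shows False
proof -
  define A1 where "A1 = Q (W p1)"
  define A2 where "A2 = Q (W p2)"
  define A3 where "A3 = Q (W p3)"
  have fin: "finite A1" "finite A2" "finite A3" unfolding A1_def A2_def A3_def Q_def using finH by auto
  have sub: "A1 \<union> A2 \<union> A3 \<subseteq> H" unfolding A1_def A2_def A3_def Q_def by auto
  have c1: "card A1 + card A2 = card (A1 \<union> A2) + card (A1 \<inter> A2)" using fin card_Un_Int by blast
  have c2: "card (A1 \<union> A2) + card A3 = card (A1 \<union> A2 \<union> A3) + card ((A1 \<union> A2) \<inter> A3)"
    using fin card_Un_Int[of "A1 \<union> A2" A3] by blast
  have c3: "card ((A1 \<union> A2) \<inter> A3) \<le> card (A1 \<inter> A3) + card (A2 \<inter> A3)"
    by (metis Int_Un_distrib2 card_Un_le)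
  have c4: "card (A1 \<union> A2 \<union> A3) \<le> card H" using sub finH card_mono by blast
  have i12: "card (A1 \<inter> A2) \<le> t div 5" unfolding A1_def A2_def using Q_int lenW d by blast
  have i13: "card (A1 \<inter> A3) \<le> t div 5" unfolding A1_def A3_def using Q_int lenW d by blast
  have i23: "card (A2 \<inter> A3) \<le> t div 5" unfolding A2_def A3_def using Q_int lenW d by blast
  have b: "card A1 \<ge> card H - t" "card A2 \<ge> card H - t" "card A3 \<ge> card H - t"
    unfolding A1_def A2_def A3_def using Q_big p by auto
  have "t div 5 * 5 \<le> t" by simp
  then show False using c1 c2 c3 c4 i12 i13 i23 b cardH_ge by linarith
qed

lemma s3_unique:
  assumes i: "i \<in> H" "s3 i" and j: "j \<in> H" "s3 j"
  shows "W i = W j"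
proof (rule ccontr)
  assume ne: "W i \<noteq> W j"
  define v where "v = W i"
  define v' where "v' = W j"
  define E where "E = Ag v v'"
  have cE: "card E \<le> t div 5" unfolding E_def v_def v'_def using card_Ag lenW ne by blast
  have finE: "finite E" unfolding E_def Ag_def by simp
  have s1i: "s1 i" "s1 j" using i j s2_s1 s3_s2 by auto
  have msgs: "W z = v \<or> W z = v'" if "z \<in> H" "s1 z" for z
    using three_msgs[OF i(1) s1i(1) j(1) s1i(2) that] ne unfolding v_def v'_def by metis
  have other: "y \<in> E" if "y \<in> H" "z \<in> H" "W y \<noteq> W z" "s1 y" "s1 z"
      "cw emb k (W z) y = cw emb k (W y) y" for y z
  proof -
    have "W y = v \<and> W z = v' \<or> W y = v' \<and> W z = v" using msgs that by metis
    then show ?thesis using that unfolding E_def Ag_def H_def by auto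
  qed
  have C: "card {z\<in>H. s1 z \<and> W z = W x} \<ge> card H - t" if x: "x \<in> H" "s3 x" for x
  proof -
    define Lx where "Lx = {y\<in>H. link1 x y \<and> s2 y}"
    have "card Lx \<ge> card H - t" unfolding Lx_def by (rule F3[OF x])
    then have "card Lx > card E" using cE cardH_ge by linarith
    then have "\<not> Lx \<subseteq> E" using finE card_mono by (metis not_le)
    then obtain y where y: "y \<in> H" "link1 x y" "s2 y" "y \<notin> E" unfolding Lx_def by auto
    have sx: "s1 x" using x s2_s1 s3_s2 by auto
    have sy: "s1 y" using y s2_s1 by auto
    have Wy: "W y = W x"
    proof (rule ccontr)
      assume "W y \<noteq> W x"
      moreover then have "y \<noteq> x" by auto
      ultimately have "cw emb k (W x) y = cw emb k (W y) y" using link1_h[OF x(1) y(1)] y(2) by auto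
      then have "y \<in> E" using other[OF y(1) x(1) _ sy sx] \<open>W y \<noteq> W x\<close> by auto
      then show False using y by auto
    qed
    have "{z\<in>H. link1 y z \<and> s1 z} \<subseteq> {z\<in>H. s1 z \<and> W z = W x}"
    proof safe
      fix z assume z: "z \<in> H" "link1 y z" "s1 z"
      show "W z = W x"
      proof (rule ccontr)
        assume "W z \<noteq> W x"
        then have "z \<noteq> y" "W y \<noteq> W z" using Wy by auto
        then have "cw emb k (W z) y = cw emb k (W y) y" using link1_h[OF y(1) z(1)] z(2) by auto
        then have "y \<in> E" using other[OF y(1) z(1) \<open>W y \<noteq> W z\<close> sy z(3)] by auto
        then show False using y by auto
      qed
    qed
    then have "card {z\<in>H. link1 y z \<and> s1 z} \<le> card {z\<in>H. s1 z \<and> W z = W x}"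
      by (intro card_mono) (auto simp: finH)
    then show ?thesis using F2[OF y(1) y(3)] by linarith
  qed
  have "{z\<in>H. s1 z \<and> W z = W i} \<union> {z\<in>H. s1 z \<and> W z = W j} \<subseteq> H" by auto
  then have "card ({z\<in>H. s1 z \<and> W z = W i} \<union> {z\<in>H. s1 z \<and> W z = W j}) \<le> card H"
    using finH card_mono by blast
  moreover have "card ({z\<in>H. s1 z \<and> W z = W i} \<union> {z\<in>H. s1 z \<and> W z = W j})
     = card {z\<in>H. s1 z \<and> W z = W i} + card {z\<in>H. s1 z \<and> W z = W j}"
    using ne by (intro card_Un_disjoint) (auto simp: finH)
  ultimately show False using C[OF i] C[OF j] cardH_ge by linarith
qed

lemma consistency:
  assumes dec_ok: "valid_decoder emb n t dec"
    and ba0: "(\<forall>i\<in>{1..n} - B. \<not> vote i) \<longrightarrow> \<not> d"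
  shows "\<forall>i\<in>{1..n} - B. \<forall>j\<in>{1..n} - B. cool_output d dec i = cool_output d dec j"
proof (cases d)
  case False
  then show ?thesis unfolding cool_output_def by simp
next
  case True
  then obtain i0 where i0: "i0 \<in> H" "vote i0" using ba0 unfolding H_def by blast
  have "{j\<in>{1..n}. rec3 i0 j} \<subseteq> {j\<in>H. s3 j} \<union> B" using rec3_h[OF i0(1)] unfolding H_def by auto
  then have "card {j\<in>{1..n}. rec3 i0 j} \<le> card ({j\<in>H. s3 j} \<union> B)"
    by (intro card_mono) (use B_sub finite_subset in \<open>auto simp: H_def\<close>)
  also have "\<dots> \<le> card {j\<in>H. s3 j} + card B" by (rule card_Un_le)
  finally have cS3: "card {j\<in>H. s3 j} \<ge> t + 1" using i0(2) B_card unfolding vote_def by linarith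
  then have "{j\<in>H. s3 j} \<noteq> {}" by (metis card.empty le_add2 not_one_le_zero order_trans)
  then obtain i1 where i1: "i1 \<in> H" "s3 i1" by auto
  define w0 where "w0 = W i1"
  have Ww0: "W j = w0" if "j \<in> H" "s3 j" for j unfolding w0_def using s3_unique[OF that i1] .
  have ynew_ok: "ynew i = cw emb k w0 i" if i: "i \<in> H" "\<not> s3 i" for i
  proof -
    define c0 where "c0 = cw emb k w0 i"
    have finS: "finite (S1view i)" unfolding S1view_def by simp
    have f0: "freq i c0 \<ge> t + 1"
    proof -
      have "{j\<in>H. s3 j} \<subseteq> {j\<in>S1view i. fst (recv1 i j) = c0}"
        using rec3_h[OF i(1)] Ww0 unfolding S1view_def recv1_def c0_def H_def by auto
      then have "card {j\<in>H. s3 j} \<le> freq i c0" unfolding freq_def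
        by (intro card_mono) (use finS in auto)
      then show ?thesis using cS3 by linarith
    qed
    have f1: "freq i v \<le> t" if "v \<noteq> c0" for v
    proof -
      have "{j\<in>S1view i. fst (recv1 i j) = v} \<subseteq> B"
      proof
        fix j assume j: "j \<in> {j\<in>S1view i. fst (recv1 i j) = v}"
        show "j \<in> B"
        proof (rule ccontr)
          assume "j \<notin> B"
          then have jH: "j \<in> H" using j unfolding S1view_def H_def by auto
          then have "s3 j" using j rec3_h[OF i(1) jH] unfolding S1view_def by auto
          then have "W j = w0" using Ww0 jH by auto
          then show False using j \<open>j \<notin> B\<close> that unfolding recv1_def c0_def by auto
        qed
      qed
      then have "freq i v \<le> card B" unfolding freq_def
        by (intro card_mono) (use B_sub finite_subset in auto)
      then show ?thesis using B_card by linarith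
    qed
    have "modes i = {c0}"
    proof
      show "modes i \<subseteq> {c0}"
      proof
        fix v assume "v \<in> modes i"
        then have "freq i c0 \<le> freq i v" unfolding modes_def by auto
        then show "v \<in> {c0}" using f0 f1[of v] by (cases "v = c0") auto
      qed
    next
      have "i1 \<in> S1view i" "fst (recv1 i i1) = c0"
        using i1 rec3_h[OF i(1) i1(1)] Ww0[OF i1] unfolding S1view_def recv1_def c0_def H_def by auto
      moreover have "freq i v' \<le> freq i c0" for v'
        using f0 f1[of v'] by (cases "v' = c0") auto
      ultimately show "{c0} \<subseteq> modes i" unfolding modes_def by blast
    qed
    then show ?thesis using tb_ok unfolding ynew_def valid_tb_def c0_def by auto
  qed
  have zvec_ok: "zvec i j = cw emb k w0 j" if i: "i \<in> H" "\<not> s3 i" and j: "j \<in> H" for i j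
  proof (cases "j = i")
    case True
    then show ?thesis using ynew_ok[OF i] unfolding zvec_def by simp
  next
    case False
    show ?thesis
    proof (cases "s3 j")
      case True
      then show ?thesis using False rec3_h[OF i(1) j] Ww0[OF j True] j
        unfolding zvec_def recv1_def H_def by auto
    next
      case ns: False
      then show ?thesis using False rec3_h[OF i(1) j] rec3_h[OF j i(1)] i ynew_ok[OF j ns] j
        unfolding zvec_def recv4_def H_def by auto
    qed
  qed
  have lw0: "length w0 = kpar t" using lenW k_def unfolding w0_def by simp
  have out: "cool_output d dec i = Some w0" if i: "i \<in> H" for i
  proof (cases "s3 i")
    case True
    then show ?thesis using \<open>d\<close> Ww0[OF i] unfolding cool_output_def by simp
  next
    case False
    define z where "z = zvec i"
    have "H \<subseteq> {j\<in>{1..n}. cw emb (kpar t) w0 j = z j}"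
      using zvec_ok[OF i False] unfolding z_def H_def k_def by auto
    then have "card H \<le> card {j\<in>{1..n}. cw emb (kpar t) w0 j = z j}" by (intro card_mono) auto
    then have ex: "\<exists>x. length x = kpar t \<and> card {j\<in>{1..n}. cw emb (kpar t) x j = z j} \<ge> n - t"
      using lw0 cardH B_card by (intro exI[of _ w0]) linarith
    then obtain x where x: "dec i z = Some x" "length x = kpar t"
        "card {j\<in>{1..n}. cw emb (kpar t) x j = z j} \<ge> n - t"
    proof -
      have D0: "(if \<exists>x. length x = kpar t \<and> card {j\<in>{1..n}. cw emb (kpar t) x j = z j} \<ge> n - t
             then (\<exists>x. dec i z = Some x \<and> length x = kpar t \<and>
                        card {j\<in>{1..n}. cw emb (kpar t) x j = z j} \<ge> n - t)
             else dec i z = None)"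
        using dec_ok unfolding valid_decoder_def by blast
      have "\<exists>x. dec i z = Some x \<and> length x = kpar t \<and>
                        card {j\<in>{1..n}. cw emb (kpar t) x j = z j} \<ge> n - t"
        using D0 by (simp only: if_P[OF ex])
      then show ?thesis using that by blast
    qed
    have "x = w0"
    proof (rule ccontr)
      assume ne: "x \<noteq> w0"
      define A where "A = {j\<in>{1..n}. cw emb k x j = z j}"
      have "A \<subseteq> (A \<inter> H) \<union> B" unfolding A_def H_def by auto
      then have "card A \<le> card ((A \<inter> H) \<union> B)"
        by (intro card_mono) (use B_sub finite_subset in \<open>auto simp: A_def\<close>)
      also have "\<dots> \<le> card (A \<inter> H) + card B" by (rule card_Un_le)
      finally have c1: "card A \<le> card (A \<inter> H) + card B" .
      have "A \<inter> H \<subseteq> Ag x w0" using zvec_ok[OF i False] unfolding A_def Ag_def z_def H_def by auto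
      then have "card (A \<inter> H) \<le> card (Ag x w0)" by (intro card_mono) (auto simp: Ag_def)
      also have "\<dots> \<le> t div 5" using card_Ag x(2) lw0 ne k_def by simp
      finally have "card (A \<inter> H) \<le> t div 5" .
      moreover have "card A \<ge> n - t" using x(3) unfolding A_def k_def .
      moreover have "t div 5 * 5 \<le> t" by simp
      ultimately show False using c1 B_card n_ge by linarith
    qed
    then show ?thesis using \<open>d\<close> False x(1) unfolding cool_output_def z_def by simp
  qed
  show ?thesis using out unfolding H_def by simp
qed

end


theorem lemma4:
  fixes n t l :: nat
    and emb :: "nat \<Rightarrow> 'f::{field,finite}"
    and b2f :: "bool list \<Rightarrow> 'f"
    and B :: "nat set"
    and w :: "nat \<Rightarrow> bool list"
    and adv :: "'f adversary"
    and dflt :: 'f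
    and tb :: "'f set \<Rightarrow> 'f"
    and dec :: "nat \<Rightarrow> (nat \<Rightarrow> 'f) \<Rightarrow> 'f list option"
    and d :: bool
  defines "W \<equiv> (\<lambda>i. encode_msg b2f (kpar t) (cpar n t l) (w i))"
  assumes n_ge: "n \<ge> 3 * t + 1"
    and field_card: "card (UNIV :: 'f set) = 2 ^ cpar n t l"
    and emb_inj: "inj_on emb {1..n}"
    and emb_nz: "\<forall>i\<in>{1..n}. emb i \<noteq> 0"
    and b2f_bij: "bij_betw b2f {xs. length xs = cpar n t l} UNIV"
    and B_sub: "B \<subseteq> {1..n}"
    and B_card: "card B \<le> t"
    and msg_len: "\<forall>i\<in>{1..n}. length (w i) = l"
    and tb_ok: "valid_tb tb"
    and dec_ok: "valid_decoder emb n t dec"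
    and ba_valid1: "(\<forall>i\<in>{1..n} - B. cool_exec.vote n t emb B W adv i) \<longrightarrow> d"
    and ba_valid0: "(\<forall>i\<in>{1..n} - B. \<not> cool_exec.vote n t emb B W adv i) \<longrightarrow> \<not> d"
  shows "\<forall>i\<in>{1..n} - B. \<forall>j\<in>{1..n} - B.
           cool_exec.cool_output n t emb B W adv dflt tb d dec i =
           cool_exec.cool_output n t emb B W adv dflt tb d dec j"
proof -
  interpret cool_ok n t emb B W adv dflt tb
  proof (unfold_locales)
    show "\<And>i. length (W i) = cool_exec.k t" unfolding W_def encode_msg_def cool_exec.k_def by simp
  qed (use assms in auto)
  show ?thesis using consistency[OF dec_ok] ba_valid0 by blast
qed

end
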